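(* Let $1/2<\delta<1$. Consider a finite point set $P\subset\mathbb{R}^1$ containing the source $s$ and a point $q\notin P$. Let $\rho_{\mathrm{old}}(p)$ be the range of a point $p$ in the source-based assignment $\rho_{\mathrm{sb}}(P)$ and $\rho_{\mathrm{new}}(p)$ its range in $\rho_{\mathrm{sb}}(P\cup\{q\})$ (ranges of points not in the set being $0$). Then $$\big|\{p\in P\cup\{q\}:\rho_{\mathrm{old}}(p)<\rho_{\mathrm{new}}(p)\}\big|\le 2\quad\text{and}\quad\big|\{p\in P\cup\{q\}:\rho_{\mathrm{old}}(p)>\rho_{\mathrm{new}}(p)\}\big|\le 1.$$
   Context: Points of $P\subset\mathbb{R}^1$ other than $s$ left of $s$ are $\ell_1,\ell_2,\dots$ and right of $s$ are $r_1,r_2,\dots$, numbered by increasing distance from $s$. The successor $\mathrm{suc}(p)$ of $r_i$ is $r_{i+1}$ and of $\ell_i$ is $\ell_{i+1}$, $s$ has the (at most) two successors $r_1,\ell_1$, and the farthest points on each side (extreme points) have no successor ($\mathrm{suc}=\mathrm{nil}$). The standard range $\rho_{\mathrm{st}}(p)$ of $p\ne s$ is $|p\,\mathrm{suc}(p)|$, or $0$ if $p$ is extreme. A point $p\ne s$ is expensive if $\mathrm{suc}(p)\ne\mathrm{nil}$ and $|p\,\mathrm{suc}(p)|>\delta\cdot|s\,\mathrm{suc}(p)|$, and cheap otherwise; $s$ is always expensive. Let $P_{\mathrm{exp}},P_{\mathrm{cheap}}$ be the sets of expensive and cheap points, and $d_{\max}=\max\{|s\,\mathrm{suc}(p)|:p\in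 P_{\mathrm{exp}}\}$ (for $p=s$ both successors are considered). The source-based range assignment is $\rho_{\mathrm{sb}}(s)=d_{\max}$, $\rho_{\mathrm{sb}}(p)=0$ for $p\in P_{\mathrm{exp}}\setminus\{s\}$, and $\rho_{\mathrm{sb}}(p)=\rho_{\mathrm{st}}(p)$ for $p\in P_{\mathrm{cheap}}$. *)

theory Defs
  imports Main Complex_Main
begin

text \<open>For p > s this is r_{i+1} after r_i,
for p < s it is l_{i+1} after l_i, and for p = s it yields both r_1 and l_1.\<close>

definition succs :: "real set \<Rightarrow> real \<Rightarrow> real \<Rightarrow> real set" where
  "succs P s p = {x \<in> P.
      (s \<le> p \<and> p < x \<and> (\<forall>y\<in>P. \<not> (p < y \<and> y < x))) \<or>
      (p \<le> s \<and> x < p \<and> (\<forall>y\<in>P. \<not> (x < y \<and> y < p)))}"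

definition rho_st :: "real set \<Rightarrow> real \<Rightarrow> real \<Rightarrow> real" where
  "rho_st P s p = (if succs P s p = {} then 0 else \<bar>p - (THE x. x \<in> succs P s p)\<bar>)"

definition expensive :: "real set \<Rightarrow> real \<Rightarrow> real \<Rightarrow> real \<Rightarrow> bool" where
  "expensive P s \<delta> p \<longleftrightarrow> p \<in> P \<and>
     (p = s \<or> (\<exists>x \<in> succs P s p. \<bar>p - x\<bar> > \<delta> * \<bar>s - x\<bar>))"

text \<open>d_max; the inserted 0 only matters when s has no successor (P = {s}).\<close>
definition d_max :: "real set \<Rightarrow> real \<Rightarrow> real \<Rightarrow> real" where
  "d_max P s \<delta> = Max (insert 0 {\<bar>s - x\<bar> | p x. expensive P s \<delta> p \<and> x \<in> succs P s p})"

definition rho_sb :: "real set \<Rightarrow> real \<Rightarrow> real \<Rightarrow> real \<Rightarrow> real" where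
  "rho_sb P s \<delta> p =
     (if p \<notin> P then 0
      else if p = s then d_max P s \<delta>
      else if expensive P s \<delta> p then 0
      else rho_st P s p)"

end

theory Submission
  imports Defs
begin

lemma succs_right:
  assumes "a \<in> P" "s \<le> a" "a < q" "\<forall>p\<in>P. p < q \<longrightarrow> p \<le> a" "p \<in> P" "p \<noteq> a"
  shows "succs (P \<union> {q}) s p = succs P s p"
proof
  show "succs (P \<union> {q}) s p \<subseteq> succs P s p"
  proof
    fix x assume x: "x \<in> succs (P \<union> {q}) s p"
    have "x \<noteq> q"
    proof
      assume xq: "x = q"
      have pa: "p \<le> a" if "p < q" using assms(4,5) that by blast
      have "(s \<le> p \<and> p < q \<and> (\<forall>y\<in>P \<union> {q}. \<not> (p < y \<and> y < q))) \<or>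
            (p \<le> s \<and> q < p)" using x xq unfolding succs_def by auto
      then show False
      proof
        assume h: "s \<le> p \<and> p < q \<and> (\<forall>y\<in>P \<union> {q}. \<not> (p < y \<and> y < q))"
        then have "p < a" using pa assms(6) by force
        then show False using h assms(1,3) by blast
      next
        assume "p \<le> s \<and> q < p" then show False using assms(2,3) by linarith
      qed
    qed
    with x show "x \<in> succs P s p" unfolding succs_def by auto
  qed
next
  show "succs P s p \<subseteq> succs (P \<union> {q}) s p"
  proof
    fix x assume x: "x \<in> succs P s p"
    have xP: "x \<in> P" using x unfolding succs_def by auto
    have pa: "p \<le> a" if "p < q" using assms(4,5) that by blast
    have "(s \<le> p \<and> p < x \<and> (\<forall>y\<in>P. \<not> (p < y \<and> y < x))) \<or>
          (p \<le> s \<and> x < p \<and> (\<forall>y\<in>P. \<not> (x < y \<and> y < p)))" using x unfolding succs_def by auto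
    then have "(s \<le> p \<and> p < x \<and> (\<forall>y\<in>P \<union> {q}. \<not> (p < y \<and> y < x))) \<or>
          (p \<le> s \<and> x < p \<and> (\<forall>y\<in>P \<union> {q}. \<not> (x < y \<and> y < p)))"
    proof
      assume h: "s \<le> p \<and> p < x \<and> (\<forall>y\<in>P. \<not> (p < y \<and> y < x))"
      have "\<not> (p < q \<and> q < x)"
      proof
        assume pq: "p < q \<and> q < x"
        then have "p < a" using pa assms(6) by force
        then show False using h pq assms(1,3) by force
      qed
      then show ?thesis using h by auto
    next
      assume h: "p \<le> s \<and> x < p \<and> (\<forall>y\<in>P. \<not> (x < y \<and> y < p))"
      have "\<not> (q < p)" using h assms(2,3) by linarith
      then show ?thesis using h by auto
    qed
    then show "x \<in> succs (P \<union> {q}) s p" using xP unfolding succs_def by auto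
  qed
qed

lemma succs_left:
  assumes "a \<in> P" "a \<le> s" "q < a" "\<forall>p\<in>P. q < p \<longrightarrow> a \<le> p" "p \<in> P" "p \<noteq> a"
  shows "succs (P \<union> {q}) s p = succs P s p"
proof
  show "succs (P \<union> {q}) s p \<subseteq> succs P s p"
  proof
    fix x assume x: "x \<in> succs (P \<union> {q}) s p"
    have "x \<noteq> q"
    proof
      assume xq: "x = q"
      have pa: "a \<le> p" if "q < p" using assms(4,5) that by blast
      have "(p \<le> s \<and> q < p \<and> (\<forall>y\<in>P \<union> {q}. \<not> (q < y \<and> y < p))) \<or>
            (s \<le> p \<and> p < q)" using x xq unfolding succs_def by auto
      then show False
      proof
        assume h: "p \<le> s \<and> q < p \<and> (\<forall>y\<in>P \<union> {q}. \<not> (q < y \<and> y < p))"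
        then have "a < p" using pa assms(6) by force
        then show False using h assms(1,3) by blast
      next
        assume "s \<le> p \<and> p < q" then show False using assms(2,3) by linarith
      qed
    qed
    with x show "x \<in> succs P s p" unfolding succs_def by auto
  qed
next
  show "succs P s p \<subseteq> succs (P \<union> {q}) s p"
  proof
    fix x assume x: "x \<in> succs P s p"
    have xP: "x \<in> P" using x unfolding succs_def by auto
    have pa: "a \<le> p" if "q < p" using assms(4,5) that by blast
    have "(s \<le> p \<and> p < x \<and> (\<forall>y\<in>P. \<not> (p < y \<and> y < x))) \<or>
          (p \<le> s \<and> x < p \<and> (\<forall>y\<in>P. \<not> (x < y \<and> y < p)))" using x unfolding succs_def by auto
    then have "(s \<le> p \<and> p < x \<and> (\<forall>y\<in>P \<union> {q}. \<not> (p < y \<and> y < x))) \<or>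
          (p \<le> s \<and> x < p \<and> (\<forall>y\<in>P \<union> {q}. \<not> (x < y \<and> y < p)))"
    proof
      assume h: "s \<le> p \<and> p < x \<and> (\<forall>y\<in>P. \<not> (p < y \<and> y < x))"
      have "\<not> (p < q)" using h assms(2,3) by linarith
      then show ?thesis using h by auto
    next
      assume h: "p \<le> s \<and> x < p \<and> (\<forall>y\<in>P. \<not> (x < y \<and> y < p))"
      have "\<not> (x < q \<and> q < p)"
      proof
        assume pq: "x < q \<and> q < p"
        then have "a < p" using pa assms(6) by force
        then show False using h pq assms(1,3) by force
      qed
      then show ?thesis using h by auto
    qed
    then show "x \<in> succs (P \<union> {q}) s p" using xP unfolding succs_def by auto
  qed
qed

lemma exists_pred:
  assumes "finite P" "s \<in> P" "q \<notin> P"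
  shows "\<exists>a\<in>P. \<forall>p\<in>P. p \<noteq> a \<longrightarrow> succs (P \<union> {q}) s p = succs P s p"
proof (cases "s < q")
  case True
  define a where "a = Max {p\<in>P. p < q}"
  have fin: "finite {p\<in>P. p < q}" using assms by auto
  have ne: "s \<in> {p\<in>P. p < q}" using True assms by auto
  have aP: "a \<in> {p\<in>P. p < q}" unfolding a_def using fin ne Max_in by blast
  have sa: "s \<le> a" unfolding a_def using fin ne by simp
  have mx: "\<forall>p\<in>P. p < q \<longrightarrow> p \<le> a" unfolding a_def using fin by simp
  show ?thesis using succs_right[OF _ sa _ mx] aP by blast
next
  case False
  then have qs: "q < s" using assms by (cases "q = s") auto
  define a where "a = Min {p\<in>P. q < p}"
  have fin: "finite {p\<in>P. q < p}" using assms by auto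
  have ne: "s \<in> {p\<in>P. q < p}" using qs assms by auto
  have aP: "a \<in> {p\<in>P. q < p}" unfolding a_def using fin ne Min_in by blast
  have sa: "a \<le> s" unfolding a_def using fin ne by simp
  have mx: "\<forall>p\<in>P. q < p \<longrightarrow> a \<le> p" unfolding a_def using fin by simp
  show ?thesis using succs_left[OF _ sa _ mx] aP by blast
qed

definition DS :: "real set \<Rightarrow> real \<Rightarrow> real \<Rightarrow> real set" where
  "DS P s \<delta> = {\<bar>s - x\<bar> | p x. expensive P s \<delta> p \<and> x \<in> succs P s p}"

lemma DS_fin: "finite P \<Longrightarrow> finite (DS P s \<delta>)"
proof -
  assume f: "finite P"
  have "DS P s \<delta> \<subseteq> (\<lambda>x. \<bar>s - x\<bar>) ` P" unfolding DS_def succs_def by auto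
  then show ?thesis using f finite_subset by blast
qed

lemma d_max_DS: "d_max P s \<delta> = Max (insert 0 (DS P s \<delta>))"
  unfolding d_max_def DS_def by simp

lemma d_max_nonneg: "finite P \<Longrightarrow> 0 \<le> d_max P s \<delta>"
  unfolding d_max_DS using DS_fin by simp

lemma d_max_mono: "finite P' \<Longrightarrow> DS P s \<delta> \<subseteq> DS P' s \<delta> \<Longrightarrow> d_max P s \<delta> \<le> d_max P' s \<delta>"
  unfolding d_max_DS by (meson DS_fin Max_mono finite_insert insert_mono insert_not_empty)

lemma rho_sb_nonneg: "finite P \<Longrightarrow> 0 \<le> rho_sb P s \<delta> p"
  unfolding rho_sb_def rho_st_def using d_max_nonneg by auto

lemma card_sub2: "U \<subseteq> {x, y::real} \<Longrightarrow> card U \<le> 2"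
proof -
  assume h: "U \<subseteq> {x, y}"
  have "card U \<le> card {x, y}" by (rule card_mono[OF _ h]) simp
  also have "\<dots> \<le> 2" by (simp add: card_insert_if)
  finally show ?thesis .
qed

lemma card_sub1: "U \<subseteq> {x::real} \<Longrightarrow> card U \<le> 1"
proof -
  assume h: "U \<subseteq> {x}"
  have "card U \<le> card {x}" by (rule card_mono[OF _ h]) simp
  then show ?thesis by simp
qed

theorem lemma10:
  fixes P :: "real set" and s q \<delta> :: real
  assumes "1/2 < \<delta>" and "\<delta> < 1"
    and "finite P" and "s \<in> P" and "q \<notin> P"
  shows "card {p \<in> P \<union> {q}. rho_sb P s \<delta> p < rho_sb (P \<union> {q}) s \<delta> p} \<le> 2
       \<and> card {p \<in> P \<union> {q}. rho_sb P s \<delta> p > rho_sb (P \<union> {q}) s \<delta> p} \<le> 1"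
proof -
  define Q where "Q = P \<union> {q}"
  have fQ: "finite Q" unfolding Q_def using assms by simp
  obtain a where aP: "a \<in> P" and sa: "\<And>p. p \<in> P \<Longrightarrow> p \<noteq> a \<Longrightarrow> succs Q s p = succs P s p"
    using exists_pred[OF assms(3,4,5)] unfolding Q_def by blast
  have aq: "a \<noteq> q" using aP assms by auto
  have ex: "expensive Q s \<delta> p = expensive P s \<delta> p" if "p \<in> P" "p \<noteq> a" for p
    using that sa[OF that] unfolding expensive_def Q_def by auto
  have same: "rho_sb P s \<delta> p = rho_sb Q s \<delta> p" if "p \<in> Q" "p \<noteq> a" "p \<noteq> s" "p \<noteq> q" for p
  proof -
    have pP: "p \<in> P" using that unfolding Q_def by auto
    show ?thesis using ex[OF pP that(2)] sa[OF pP that(2)] pP that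
      unfolding rho_sb_def rho_st_def Q_def by auto
  qed
  have fq: "rho_sb P s \<delta> q = 0" unfolding rho_sb_def using assms by simp
  have nnQ: "\<And>p. 0 \<le> rho_sb Q s \<delta> p" using rho_sb_nonneg[OF fQ] .
  have nnP: "\<And>p. 0 \<le> rho_sb P s \<delta> p" using rho_sb_nonneg[OF assms(3)] .
  have sQ: "s \<in> Q" "q \<in> Q" "a \<in> Q" unfolding Q_def using assms aP by auto
  define UP where "UP = {p \<in> Q. rho_sb P s \<delta> p < rho_sb Q s \<delta> p}"
  define DN where "DN = {p \<in> Q. rho_sb P s \<delta> p > rho_sb Q s \<delta> p}"
  have UPs: "UP \<subseteq> {a, s, q}" unfolding UP_def using same by fastforce
  have DNs: "DN \<subseteq> {a, s}"
  proof
    fix p assume p: "p \<in> DN"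
    then have pQ: "p \<in> Q" and lt: "rho_sb Q s \<delta> p < rho_sb P s \<delta> p" unfolding DN_def by auto
    have "p \<noteq> q" using lt fq nnQ[of q] by auto
    then show "p \<in> {a, s}" using same[OF pQ] lt by fastforce
  qed
  have c2: "card {x, y} \<le> 2" for x y :: real by (simp add: card_insert_if)
  have up: "card UP \<le> 2"
  proof (cases "a = s")
    case True
    then have "UP \<subseteq> {s, q}" using UPs by auto
    then show ?thesis using card_sub2 by blast
  next
    case False
    have "\<not> (a \<in> UP \<and> q \<in> UP \<and> s \<in> UP)"
    proof
      assume h: "a \<in> UP \<and> q \<in> UP \<and> s \<in> UP"
      have na: "\<not> expensive Q s \<delta> a"
      proof
        assume "expensive Q s \<delta> a"
        then have "rho_sb Q s \<delta> a = 0" unfolding rho_sb_def using False sQ by simp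
        then show False using h nnP[of a] unfolding UP_def by simp
      qed
      have nq: "\<not> expensive Q s \<delta> q"
      proof
        assume "expensive Q s \<delta> q"
        then have "rho_sb Q s \<delta> q = 0" unfolding rho_sb_def using assms sQ by auto
        then show False using h fq unfolding UP_def by simp
      qed
      have "DS Q s \<delta> \<subseteq> DS P s \<delta>"
      proof
        fix z assume "z \<in> DS Q s \<delta>"
        then obtain p x where z: "z = \<bar>s - x\<bar>" "expensive Q s \<delta> p" "x \<in> succs Q s p"
          unfolding DS_def by blast
        have pQ: "p \<in> Q" using z(2) unfolding expensive_def by simp
        have "p \<noteq> a" "p \<noteq> q" using na nq z(2) by auto
        then have pP: "p \<in> P" "p \<noteq> a" using pQ unfolding Q_def by auto
        show "z \<in> DS P s \<delta>" unfolding DS_def using z ex[OF pP] sa[OF pP] by auto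
      qed
      then have "d_max Q s \<delta> \<le> d_max P s \<delta>" using d_max_mono assms(3) by blast
      then have "rho_sb Q s \<delta> s \<le> rho_sb P s \<delta> s" unfolding rho_sb_def using sQ assms by simp
      then show False using h unfolding UP_def by simp
    qed
    then have "UP \<subseteq> {s, q} \<or> UP \<subseteq> {a, s} \<or> UP \<subseteq> {a, q}" using UPs by blast
    then show ?thesis using card_sub2 by blast
  qed
  have dn: "card DN \<le> 1"
  proof (cases "a = s")
    case True
    then have "DN \<subseteq> {s}" using DNs by auto
    then show ?thesis using card_sub1 by blast
  next
    case False
    have "\<not> (a \<in> DN \<and> s \<in> DN)"
    proof
      assume h: "a \<in> DN \<and> s \<in> DN"
      have na: "\<not> expensive P s \<delta> a"
      proof
        assume "expensive P s \<delta> a"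
        then have "rho_sb P s \<delta> a = 0" unfolding rho_sb_def using False aP by simp
        then show False using h nnQ[of a] unfolding DN_def by simp
      qed
      have "DS P s \<delta> \<subseteq> DS Q s \<delta>"
      proof
        fix z assume "z \<in> DS P s \<delta>"
        then obtain p x where z: "z = \<bar>s - x\<bar>" "expensive P s \<delta> p" "x \<in> succs P s p"
          unfolding DS_def by blast
        have pP: "p \<in> P" "p \<noteq> a" using z(2) na unfolding expensive_def by auto
        show "z \<in> DS Q s \<delta>" unfolding DS_def using z ex[OF pP] sa[OF pP] by auto
      qed
      then have "d_max P s \<delta> \<le> d_max Q s \<delta>" using d_max_mono fQ by blast
      then have "rho_sb P s \<delta> s \<le> rho_sb Q s \<delta> s" unfolding rho_sb_def using sQ assms by simp
      then show False using h unfolding DN_def by simp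
    qed
    then have "DN \<subseteq> {s} \<or> DN \<subseteq> {a}" using DNs by blast
    then show ?thesis using card_sub1 by blast
  qed
  show ?thesis using up dn unfolding UP_def DN_def Q_def by simp
qed

end
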